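(* Let $P\subseteq M_{\mathbb{R}}$ be a simplicial reflexive polytope having facets $F$ and $-F$. Let the vertex set of $F$ be $\{e_1,\dots,e_d\}$ and let $e_1^*,\dots,e_d^*$ be the dual $\mathbb{R}$-basis of $N_{\mathbb{R}}$. For $i=1,\dots,d$ let $F_i$ be the unique facet of $P$ with $F_i\cap F=\mathrm{conv}(e_j: j\neq i)$. Let $u=\eta_F$. Let $v$ be a vertex of $P$ with $\langle u,v\rangle=0$, and write $v=\sum_{i=1}^d q_ie_i$ with $q_i\in\mathbb{Q}$. Then for every $i=1,\dots,d$: $$q_i<0\iff q_i=-1\iff v\in F_i,$$ and in this case $e_i^*=\eta_{F_i}-u\in P^*\cap N$. Moreover, there are subsets $I,J\subseteq\{1,\dots,d\}$ with $I\cap J=\emptyset$ and $|I|=|J|$ such that $v=\sum_{j\in J}e_j-\sum_{i\in I}e_i$.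
   Context: $M\cong\mathbb{Z}^d$, $N=\mathrm{Hom}(M,\mathbb{Z})$ with pairing $\langle\cdot,\cdot\rangle$, $M_{\mathbb{R}},N_{\mathbb{R}}$ the real extensions. A Fano polytope is a $d$-dimensional lattice polytope in $M_{\mathbb{R}}$ with $0$ in its interior and primitive vertices; for a facet $F$, $\eta_F\in N_{\mathbb{R}}$ is the unique vector with $\langle\eta_F,x\rangle=-1$ for all $x\in F$. The dual polytope is $P^*=\{x\in N_{\mathbb{R}}:\langle x,y\rangle\ge-1\ \forall y\in P\}$, whose vertices are the $\eta_F$; $P$ is reflexive if $P^*$ is a lattice polytope; simplicial if each facet is a simplex. Note $e_1,\dots,e_d$ need not be a lattice basis. *)

theory Defs
  imports "HOL-Analysis.Analysis"
begin

text \<open>We identify M with the integer vectors in real^'n (M_R = real^'n) and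
  N = Hom(M,Z) with the integer vectors in real^'n as well (N_R = real^'n),
  the pairing being the standard inner product.\<close>

definition lattice_pt :: "real^'n \<Rightarrow> bool" where
  "lattice_pt x \<longleftrightarrow> (\<forall>i. x $ i \<in> \<int>)"

definition primitive :: "real^'n \<Rightarrow> bool" where
  "primitive x \<longleftrightarrow> lattice_pt x \<and> x \<noteq> 0 \<and>
     (\<forall>y (k::int). lattice_pt y \<and> x = of_int k *\<^sub>R y \<longrightarrow> \<bar>k\<bar> = 1)"

definition lattice_polytope :: "(real^'n) set \<Rightarrow> bool" where
  "lattice_polytope P \<longleftrightarrow> (\<exists>S. finite S \<and> (\<forall>x\<in>S. lattice_pt x) \<and> P = convex hull S)"

definition fano_polytope :: "(real^'n) set \<Rightarrow> bool" where
  "fano_polytope P \<longleftrightarrow> lattice_polytope P \<and> aff_dim P = int CARD('n) \<and>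
     0 \<in> interior P \<and> (\<forall>v. v extreme_point_of P \<longrightarrow> primitive v)"

definition eta :: "(real^'n) set \<Rightarrow> real^'n" where
  "eta F = (THE w. \<forall>x\<in>F. inner w x = -1)"

definition dual_polytope :: "(real^'n) set \<Rightarrow> (real^'n) set" where
  "dual_polytope P = {x. \<forall>y\<in>P. inner x y \<ge> -1}"

definition reflexive_polytope :: "(real^'n) set \<Rightarrow> bool" where
  "reflexive_polytope P \<longleftrightarrow> fano_polytope P \<and> lattice_polytope (dual_polytope P)"

definition simplicial_polytope :: "(real^'n) set \<Rightarrow> bool" where
  "simplicial_polytope P \<longleftrightarrow> (\<forall>F. F facet_of P \<longrightarrow> (\<exists>k. k simplex F))"

end

theory Submission
  imports Defs
begin

lemma eta_unique:
  fixes S :: "(real^'n) set"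
  assumes "aff_dim S = int CARD('n) - 1" "\<forall>x\<in>S. inner w x = -1" "\<forall>x\<in>S. inner w' x = -1"
  shows "w = w'"
proof (rule ccontr)
  assume ne: "w \<noteq> w'"
  define z where "z = w - w'"
  have z: "z \<noteq> 0" using ne z_def by simp
  have sub: "insert 0 S \<subseteq> {x. inner z x = 0}" using assms(2,3) by (auto simp: z_def inner_diff_left)
  have "affine hull S \<subseteq> {x. inner w x = -1}"
    using assms(2) by (intro hull_minimal) (auto simp: affine_hyperplane)
  then have "0 \<notin> affine hull S" by auto
  then have "aff_dim (insert 0 S) = int CARD('n)" using assms(1) by (simp add: aff_dim_insert)
  moreover have "aff_dim (insert 0 S) \<le> aff_dim {x. inner z x = 0}" by (rule aff_dim_subset[OF sub])
  ultimately show False using z by simp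
qed

lemma lattice_inner: "lattice_pt a \<Longrightarrow> lattice_pt b \<Longrightarrow> inner a (b::real^'n) \<in> \<int>"
  unfolding lattice_pt_def inner_vec_def by (intro Ints_sum Ints_mult) auto

lemma lattice_neg: "lattice_pt a \<Longrightarrow> lattice_pt (- (a::real^'n))"
  unfolding lattice_pt_def by auto

lemma lattice_diff: "lattice_pt a \<Longrightarrow> lattice_pt b \<Longrightarrow> lattice_pt (a - (b::real^'n))"
  unfolding lattice_pt_def by auto

lemma int_ge: "(x::real) \<in> \<int> \<Longrightarrow> x \<ge> -1 \<Longrightarrow> x \<noteq> -1 \<Longrightarrow> x \<ge> 0"
proof -
  assume "x \<in> \<int>" "x \<ge> -1" "x \<noteq> -1"
  then obtain k where k: "x = of_int k" "of_int k \<ge> (-1::real)" "of_int k \<noteq> (-1::real)"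
    by (auto elim: Ints_cases)
  then have "k \<ge> -1" "k \<noteq> -1" by linarith+
  then have "k \<ge> 0" by linarith
  then show "x \<ge> 0" using k(1) by simp
qed

lemma int_neg: "(x::real) \<in> \<int> \<Longrightarrow> x \<ge> -1 \<Longrightarrow> x < 0 \<Longrightarrow> x = -1"
  using int_ge by force

lemma int_gt2: "(x::real) \<in> \<int> \<Longrightarrow> x > -2 \<Longrightarrow> x \<ge> -1"
proof -
  assume "x \<in> \<int>" "x > -2"
  then obtain k where k: "x = of_int k" "of_int k > (-2::real)"
    by (auto elim: Ints_cases)
  then have "k > -2" by linarith
  then have "k \<ge> -1" by linarith
  then show "x \<ge> -1" using k(1) by simp
qed

lemma extreme_neg:
  fixes x :: "'a::real_vector"
  assumes "x extreme_point_of S" shows "(- x) extreme_point_of (uminus ` S)"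
proof -
  have "- x \<notin> open_segment (- a) (- b)" if "a \<in> S" "b \<in> S" for a b
  proof
    assume "- x \<in> open_segment (- a) (- b)"
    then obtain t where "a \<noteq> b" "0 < t" "t < 1" "- x = (1 - t) *\<^sub>R (- a) + t *\<^sub>R (- b)"
      by (auto simp: in_segment)
    then have "x \<in> open_segment a b" by (auto simp: in_segment algebra_simps intro!: exI[of _ t])
    then show False using assms that by (auto simp: extreme_point_of_def)
  qed
  then show ?thesis using assms by (auto simp: extreme_point_of_def)
qed

lemma fano_polytope_facts:
  fixes P :: "(real^'n) set"
  assumes "fano_polytope P"
  shows "polytope P" "polyhedron P" "compact P" "convex P" "aff_dim P = int CARD('n)" "0 \<in> interior P"
    "\<And>v. v extreme_point_of P \<Longrightarrow> lattice_pt v"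
proof -
  obtain S where S: "finite S" "P = convex hull S" using assms
    unfolding fano_polytope_def lattice_polytope_def by blast
  show "polytope P" using S by (auto simp: polytope_def)
  then show "polyhedron P" "compact P" "convex P"
    by (auto simp: polytope_imp_polyhedron polytope_imp_compact polytope_imp_convex)
  show "aff_dim P = int CARD('n)" "0 \<in> interior P" using assms by (auto simp: fano_polytope_def)
  show "\<And>v. v extreme_point_of P \<Longrightarrow> lattice_pt v" using assms
    by (auto simp: fano_polytope_def primitive_def)
qed

lemma facet_eta:
  fixes P G :: "(real^'n) set"
  assumes fano: "fano_polytope P" and G: "G facet_of P"
  shows "\<forall>x\<in>G. inner (eta G) x = -1" "\<forall>x\<in>P. inner (eta G) x \<ge> -1"
    "G = P \<inter> {x. inner (eta G) x = -1}"
    "\<And>w. \<forall>x\<in>G. inner w x = -1 \<Longrightarrow> w = eta G"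
    "aff_dim G = int CARD('n) - 1"
proof -
  note pf = fano_polytope_facts[OF fano]
  show affG: "aff_dim G = int CARD('n) - 1" using G pf(5) by (simp add: facet_of_def)
  obtain a b where ab: "a \<noteq> 0" "P \<subseteq> {x. a \<bullet> x \<le> b}" "G = P \<inter> {x. a \<bullet> x = b}"
    using facet_of_polyhedron[OF pf(2) G] by blast
  obtain \<epsilon> where eps: "\<epsilon> > 0" "ball 0 \<epsilon> \<subseteq> P" using pf(6) by (meson mem_interior)
  define y where "y = (\<epsilon> / (2 * norm a)) *\<^sub>R a"
  have na: "norm a > 0" using ab(1) by simp
  have "norm y < \<epsilon>" using eps na by (simp add: y_def)
  then have "y \<in> P" using eps by auto
  then have "a \<bullet> y \<le> b" using ab by auto
  moreover have "a \<bullet> y = \<epsilon> * norm a / 2" using na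
    by (simp add: y_def power2_norm_eq_inner[symmetric] power2_eq_square)
  moreover have "\<epsilon> * norm a / 2 > 0" using eps na by simp
  ultimately have bpos: "b > 0" by linarith
  define w where "w = (- 1 / b) *\<^sub>R a"
  have wx: "inner w x = - (a \<bullet> x) / b" for x by (simp add: w_def)
  have wG: "\<forall>x\<in>G. inner w x = -1" using ab bpos by (simp add: wx)
  have uniq: "\<And>w'. \<forall>x\<in>G. inner w' x = -1 \<Longrightarrow> w' = w"
    using eta_unique[OF affG] wG by blast
  have "eta G = w" unfolding eta_def
  proof (rule the_equality)
    show "\<forall>x\<in>G. inner w x = -1" by (rule wG)
    show "\<And>w'. \<forall>x\<in>G. inner w' x = -1 \<Longrightarrow> w' = w" by (rule uniq)
  qed
  then show "\<forall>x\<in>G. inner (eta G) x = -1" using wG by simp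
  show "\<And>w'. \<forall>x\<in>G. inner w' x = -1 \<Longrightarrow> w' = eta G"
    using uniq \<open>eta G = w\<close> by simp
  have key: "inner w x \<ge> -1 \<longleftrightarrow> a \<bullet> x \<le> b" "inner w x = -1 \<longleftrightarrow> a \<bullet> x = b" for x
  proof -
    have "inner w x = - ((a \<bullet> x) / b)" using wx[of x] by simp
    then show "inner w x \<ge> -1 \<longleftrightarrow> a \<bullet> x \<le> b" "inner w x = -1 \<longleftrightarrow> a \<bullet> x = b"
      using bpos by (auto simp: divide_le_eq_1 le_divide_eq_1)
  qed
  show "\<forall>x\<in>P. inner (eta G) x \<ge> -1" using \<open>eta G = w\<close> ab(2) key(1) by auto
  show "G = P \<inter> {x. inner (eta G) x = -1}" using \<open>eta G = w\<close> ab(3) key(2) by auto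
qed

lemma eta_lattice:
  fixes P G :: "(real^'n) set"
  assumes refl: "reflexive_polytope P" and G: "G facet_of P"
  shows "lattice_pt (eta G)"
proof -
  have fano: "fano_polytope P" using refl by (simp add: reflexive_polytope_def)
  note fe = facet_eta[OF fano G]
  obtain T where T: "finite T" "\<forall>x\<in>T. lattice_pt x" "dual_polytope P = convex hull T"
    using refl unfolding reflexive_polytope_def lattice_polytope_def by blast
  have mem: "eta G \<in> dual_polytope P" using fe(2) by (auto simp: dual_polytope_def)
  have "eta G extreme_point_of dual_polytope P"
    unfolding extreme_point_of_def
  proof (intro conjI ballI mem notI)
    fix a b assume a: "a \<in> dual_polytope P" and b: "b \<in> dual_polytope P"
      and s: "eta G \<in> open_segment a b"
    then obtain t where t: "a \<noteq> b" "0 < t" "t < 1" "eta G = (1 - t) *\<^sub>R a + t *\<^sub>R b"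
      by (auto simp: in_segment)
    have "inner a x = -1 \<and> inner b x = -1" if x: "x \<in> G" for x
    proof -
      have xP: "x \<in> P" using x G facet_of_imp_subset by blast
      have "inner a x \<ge> -1" "inner b x \<ge> -1" using a b xP by (auto simp: dual_polytope_def)
      moreover have "(1 - t) * inner a x + t * inner b x = -1"
        using fe(1) x t(4) by (metis inner_add_left inner_scaleR_left)
      ultimately have h: "inner a x + 1 \<ge> 0" "inner b x + 1 \<ge> 0"
        "(1 - t) * (inner a x + 1) + t * (inner b x + 1) = 0"
        by (auto simp: algebra_simps)
      have p1: "(1 - t) * (inner a x + 1) \<ge> 0" "t * (inner b x + 1) \<ge> 0"
        using h t(2,3) by auto
      then have "(1 - t) * (inner a x + 1) = 0" "t * (inner b x + 1) = 0" using h(3) by linarith+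
      then show ?thesis using t(2,3) by auto
    qed
    then have "a = eta G" "b = eta G" using fe(4) by auto
    then show False using t(1) by simp
  qed
  then have "eta G \<in> T" using T(3) extreme_point_of_convex_hull by metis
  then show ?thesis using T(2) by blast
qed

lemma simplex_count:
  fixes P G :: "(real^'n) set"
  assumes fano: "fano_polytope P" and simp: "simplicial_polytope P" and G: "G facet_of P"
    and A: "A \<subseteq> G" "\<forall>a\<in>A. a extreme_point_of P"
  shows "card A \<le> CARD('n)"
proof -
  obtain k where k: "k simplex G" using simp G by (auto simp: simplicial_polytope_def)
  then obtain C where C: "finite C" "\<not> affine_dependent C" "int (card C) = k + 1" "G = convex hull C"
    by (auto simp: simplex)
  have "aff_dim G = k" using k by (rule aff_dim_simplex)
  then have cC: "card C = CARD('n)" using facet_eta(5)[OF fano G] C(3) by simp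
  have "a \<in> C" if a: "a \<in> A" for a
  proof -
    have "a extreme_point_of G" using A a G facet_of_imp_subset
      unfolding extreme_point_of_def by blast
    then show ?thesis using C(4) extreme_point_of_convex_hull by metis
  qed
  then have "A \<subseteq> C" by blast
  then show ?thesis using C(1) cC card_mono by metis
qed

lemma sum_special:
  fixes q f :: "'n::finite \<Rightarrow> real"
  assumes "sum q UNIV = 0" "\<forall>j. j \<noteq> i \<longrightarrow> f j = a"
  shows "(\<Sum>j\<in>UNIV. q j * f j) = q i * (f i - a)"
proof -
  have "(\<Sum>j\<in>UNIV. q j * f j) = (\<Sum>j\<in>UNIV. q j * a + (if j = i then q j * (f i - a) else 0))"
    using assms(2) by (intro sum.cong) (auto simp: algebra_simps)
  also have "\<dots> = a * sum q UNIV + q i * (f i - a)"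
    by (simp add: sum.distrib sum_distrib_left mult.commute)
  finally show ?thesis using assms(1) by simp
qed

lemma card_img_minus:
  fixes e :: "'n::finite \<Rightarrow> 'a"
  assumes "inj e"
  shows "card (e ` (UNIV - {i})) = CARD('n) - 1" "CARD('n) \<ge> 1"
proof -
  show "card (e ` (UNIV - {i})) = CARD('n) - 1"
    using assms by (simp add: card_image inj_on_subset card_Diff_singleton)
  show "CARD('n) \<ge> 1" by (simp add: Suc_le_eq)
qed

lemma count_contra:
  fixes P G :: "(real^'n) set" and e :: "'n \<Rightarrow> real^'n"
  assumes fano: "fano_polytope P" and simp: "simplicial_polytope P" and G: "G facet_of P"
    and inj: "inj e" and sub: "insert a (insert b (e ` (UNIV - {i}))) \<subseteq> G"
    and ext: "\<forall>x\<in>insert a (insert b (e ` (UNIV - {i}))). x extreme_point_of P"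
    and a: "a \<noteq> b" "a \<notin> e ` (UNIV - {i})" "b \<notin> e ` (UNIV - {i})"
  shows False
proof -
  have "card (insert a (insert b (e ` (UNIV - {i})))) = CARD('n) + 1"
    using a card_img_minus(1)[OF inj, of i] by simp
  then show False using simplex_count[OF fano simp G sub ext] by simp
qed

lemma int01: "(x::real) \<in> \<int> \<Longrightarrow> x \<ge> 0 \<Longrightarrow> x \<le> 1 \<Longrightarrow> x \<noteq> 0 \<Longrightarrow> x = 1"
proof -
  assume "x \<in> \<int>" "x \<ge> 0" "x \<le> 1" "x \<noteq> 0"
  then obtain k where k: "x = of_int k" "of_int k \<ge> (0::real)" "of_int k \<le> (1::real)" "of_int k \<noteq> (0::real)"
    by (auto elim: Ints_cases)
  then have "k \<ge> 0" "k \<le> 1" "k \<noteq> 0" by linarith+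
  then have "k = 1" by linarith
  then show "x = 1" using k(1) by simp
qed

theorem lemma3p1:
  fixes P F :: "(real^'n) set"
    and e estar :: "'n \<Rightarrow> real^'n"
    and Fi :: "'n \<Rightarrow> (real^'n) set"
    and v :: "real^'n"
    and q :: "'n \<Rightarrow> real"
  assumes refl: "reflexive_polytope P"
    and simp: "simplicial_polytope P"
    and F: "F facet_of P"
    and negF: "uminus ` F facet_of P"
    and e_inj: "inj e"
    and e_verts: "{x. x extreme_point_of F} = range e"
    and estar: "\<And>i j. inner (estar i) (e j) = (if i = j then 1 else 0)"
    and Fi: "\<And>i. Fi i facet_of P"
    and Fi_int: "\<And>i. Fi i \<inter> F = convex hull (e ` (UNIV - {i}))"
    and v: "v extreme_point_of P"
    and uv: "inner (eta F) v = 0"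
    and q: "v = (\<Sum>i\<in>UNIV. q i *\<^sub>R e i)"
    and q_rat: "\<And>i. q i \<in> \<rat>"
  shows "(\<forall>i. (q i < 0 \<longleftrightarrow> q i = -1) \<and> (q i = -1 \<longleftrightarrow> v \<in> Fi i) \<and>
            (q i < 0 \<longrightarrow> estar i = eta (Fi i) - eta F \<and>
                         estar i \<in> dual_polytope P \<and> lattice_pt (estar i)))
         \<and> (\<exists>I J :: 'n set. I \<inter> J = {} \<and> card I = card J \<and>
              v = (\<Sum>j\<in>J. e j) - (\<Sum>i\<in>I. e i))"
proof -
  have fano: "fano_polytope P" using refl by (simp add: reflexive_polytope_def)
  note pf = fano_polytope_facts[OF fano]
  define u where "u = eta F"
  note fF = facet_eta[OF fano F, folded u_def]
  note fnF = facet_eta[OF fano negF]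
  have Fface: "F face_of P" using F by (rule facet_of_imp_face_of)
  have nFface: "uminus ` F face_of P" using negF by (rule facet_of_imp_face_of)
  have Fsub: "F \<subseteq> P" using F by (rule facet_of_imp_subset)
  have nFsub: "uminus ` F \<subseteq> P" using negF by (rule facet_of_imp_subset)
  have eextF: "e j extreme_point_of F" for j using e_verts by blast
  have eF: "e j \<in> F" for j using eextF[of j] by (simp add: extreme_point_of_def)
  have eext: "e j extreme_point_of P" for j
    using extreme_point_of_face[OF Fface] eextF eF by blast
  have elat: "lattice_pt (e j)" for j using pf(7) eext by blast
  have neF: "- e j \<in> uminus ` F" for j using eF by blast
  have neext: "(- e j) extreme_point_of P" for j
    using extreme_point_of_face[OF nFface] extreme_neg[OF eextF[of j]] neF by blast
  have nelat: "lattice_pt (- e j)" for j using pf(7) neext by blast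
  have eP: "e j \<in> P" and neP: "- e j \<in> P" for j using eF neF Fsub nFsub by auto
  have Fcomp: "compact F" using face_of_imp_compact[OF pf(4) pf(3) Fface] .
  have Fhull: "F = convex hull (range e)"
    using Krein_Milman_Minkowski[OF Fcomp face_of_imp_convex[OF Fface]] e_verts by simp
  have ue: "inner u (e j) = -1" for j using fF(1) eF by blast
  have "- u = eta (uminus ` F)"
    using fnF(4)[of "- u"] fF(1) by auto
  then have etan: "eta (uminus ` F) = - u" by simp
  have nFeq: "uminus ` F = P \<inter> {x. inner u x = 1}" using fnF(3) unfolding etan by simp
  have ule: "\<forall>x\<in>P. inner u x \<le> 1" using fnF(2) unfolding etan by simp
  have vP: "v \<in> P" using v by (simp add: extreme_point_of_def)
  have vlat: "lattice_pt v" using pf(7) v by blast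
  have inner_v: "inner w v = (\<Sum>j\<in>UNIV. q j * inner w (e j))" for w
    by (simp add: q inner_sum_right)
  have sumq: "sum q UNIV = 0"
    using uv[folded u_def] by (simp add: inner_v ue sum_negf)
  have ulat: "lattice_pt u" unfolding u_def using eta_lattice[OF refl F] .
  have u_ne: "inner u (- e j) = 1" for j using ue[of j] by simp
  have uvz: "inner u v = 0" using uv u_def by simp

  have neg: "(q i < 0 \<longleftrightarrow> q i = -1) \<and> (q i = -1 \<longleftrightarrow> v \<in> Fi i) \<and>
            (q i < 0 \<longrightarrow> estar i = eta (Fi i) - eta F \<and>
                         estar i \<in> dual_polytope P \<and> lattice_pt (estar i))" for i
  proof -
    define w where "w = eta (Fi i)"
    note fw = facet_eta[OF fano Fi[of i], folded w_def]
    have wlat: "lattice_pt w" unfolding w_def using eta_lattice[OF refl Fi] .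
    have ejFi: "e j \<in> Fi i" if "j \<noteq> i" for j
    proof -
      have "e j \<in> convex hull (e ` (UNIV - {i}))" using that by (intro hull_inc) auto
      then show ?thesis using Fi_int[of i] by blast
    qed
    have einot: "e i \<notin> Fi i"
    proof
      assume "e i \<in> Fi i"
      then have ein: "e i \<in> convex hull (e ` (UNIV - {i}))" using Fi_int[of i] eF by blast
      have "convex hull (e ` (UNIV - {i})) \<subseteq> F" using Fi_int[of i] by blast
      then have "e i extreme_point_of convex hull (e ` (UNIV - {i}))"
        using eextF[of i] ein unfolding extreme_point_of_def by blast
      then have "e i \<in> e ` (UNIV - {i})" by (rule extreme_point_of_convex_hull)
      then show False using e_inj by (auto dest: injD)
    qed
    have wej: "inner w (e j) = -1" if "j \<noteq> i" for j using fw(1) ejFi[OF that] by blast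
    have wei_int: "inner w (e i) \<in> \<int>" using lattice_inner[OF wlat elat] .
    have wei_ge: "inner w (e i) \<ge> -1" using fw(2) eP by blast
    have "inner w (e i) \<noteq> -1" using fw(3) einot eP by blast
    then have wei0: "inner w (e i) \<ge> 0" using int_ge wei_int wei_ge by blast
    have "inner w (- e i) \<ge> -1" using fw(2) neP by blast
    then have wei1: "inner w (e i) \<le> 1" by simp
    have wv: "inner w v = q i * (inner w (e i) + 1)"
      using sum_special[OF sumq, of i "\<lambda>j. inner w (e j)" "-1"] wej by (simp add: inner_v)
    have wv_int: "inner w v \<in> \<int>" using lattice_inner[OF wlat vlat] .
    have wv_ge: "inner w v \<ge> -1" using fw(2) vP by blast
    have A: "q i < 0 \<Longrightarrow> q i = -1 \<and> inner w (e i) = 0 \<and> v \<in> Fi i"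
    proof -
      assume qn: "q i < 0"
      have "inner w v < 0" using qn wei0 by (simp add: wv mult_neg_pos)
      then have wvm: "inner w v = -1" using int_neg wv_int wv_ge by blast
      then have vFi: "v \<in> Fi i" using fw(3) vP by blast
      have "inner w (e i) = 0"
      proof (rule ccontr)
        assume "inner w (e i) \<noteq> 0"
        then have "inner w (e i) = 1" using int01 wei0 wei1 wei_int by blast
        then have "- e i \<in> Fi i" using fw(3) neP by simp
        moreover have "e ` (UNIV - {i}) \<subseteq> Fi i" using ejFi by blast
        ultimately have sub: "insert v (insert (- e i) (e ` (UNIV - {i}))) \<subseteq> Fi i" using vFi by blast
        have ext: "\<forall>x\<in>insert v (insert (- e i) (e ` (UNIV - {i}))). x extreme_point_of P"
          using v neext eext by blast
        have d1: "v \<noteq> - e i" using uvz u_ne[of i] by auto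
        have d2: "v \<notin> e ` (UNIV - {i})" using uvz ue by auto
        have d3: "- e i \<notin> e ` (UNIV - {i})" using u_ne[of i] ue by force
        show False using count_contra[OF fano simp Fi[of i] e_inj sub ext d1 d2 d3] .
      qed
      then show ?thesis using wvm vFi wv by simp
    qed
    have B: "v \<in> Fi i \<Longrightarrow> q i < 0"
    proof -
      assume "v \<in> Fi i"
      then have "inner w v = -1" using fw(1) by blast
      then have "q i * (inner w (e i) + 1) < 0" using wv by simp
      then show "q i < 0" using wei0 by (simp add: mult_less_0_iff)
    qed
    have C: "estar i = w - u \<and> estar i \<in> dual_polytope P \<and> lattice_pt (estar i)" if qn: "q i < 0"
    proof -
      have wei: "inner w (e i) = 0" using A qn by blast
      define z where "z = w - u - estar i"
      have ze: "inner z (e j) = 0" for j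
        using wej[of j] ue[of j] estar[of i j] wei by (cases "j = i") (auto simp: z_def inner_diff_left)
      have "F \<subseteq> {x. inner z x = 0}" unfolding Fhull
        using ze by (intro hull_minimal) (auto simp: convex_hyperplane)
      then have "\<forall>x\<in>F. inner (u + z) x = -1" using fF(1) by (auto simp: inner_add_left)
      then have "u + z = u" using eta_unique[OF fF(5)] fF(1) by blast
      then have zz: "z = 0" by simp
      then have es: "estar i = w - u" by (simp add: z_def)
      have lat: "lattice_pt (estar i)" using es lattice_diff[OF wlat ulat] by simp
      have wej0: "inner w (e j) \<le> 0" for j by (cases "j = i") (use wej wei in auto)
      have wF: "F \<subseteq> {y. inner w y \<le> 0}" unfolding Fhull
        using wej0 by (intro hull_minimal) (auto simp: convex_halfspace_le)
      have wx: "inner w x \<ge> 0" if "x \<in> P" "inner u x = 1" for x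
      proof -
        have "x \<in> uminus ` F" using nFeq that by blast
        then obtain y where "y \<in> F" "x = - y" by blast
        then show ?thesis using wF by auto
      qed
      have ext_ge: "inner (estar i) x \<ge> -1" if x: "x extreme_point_of P" for x
      proof -
        have xP: "x \<in> P" using x by (simp add: extreme_point_of_def)
        have xint: "inner (estar i) x \<in> \<int>" using lattice_inner[OF lat pf(7)[OF x]] .
        have "inner (estar i) x > -2"
        proof (rule ccontr)
          assume "\<not> inner (estar i) x > -2"
          then have h: "inner w x - inner u x \<le> -2" using es by (simp add: inner_diff_left)
          have "inner w x \<ge> -1" "inner u x \<le> 1" using fw(2) ule xP by auto
          then have "inner u x = 1" "inner w x = -1" using h by linarith+
          then show False using wx xP by fastforce
        qed
        then show ?thesis using int_gt2 xint by blast
      qed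
      have "P \<subseteq> {x. inner (estar i) x \<ge> -1}"
        apply (subst Krein_Milman_Minkowski[OF pf(3) pf(4)])
        using ext_ge by (intro hull_minimal) (auto simp: convex_halfspace_ge)
      then have "estar i \<in> dual_polytope P" by (auto simp: dual_polytope_def)
      then show ?thesis using es lat by simp
    qed
    show ?thesis using A B C unfolding w_def u_def by auto
  qed

  have pos: "q i > 0 \<Longrightarrow> q i = 1" for i
  proof -
    assume qp: "q i > 0"
    obtain j where qj: "q j < 0"
    proof (rule ccontr)
      assume "\<not> thesis"
      then have "\<forall>j. q j \<ge> 0" using that by (meson not_le)
      then have "q i \<le> sum q UNIV" by (intro member_le_sum) auto
      then show False using qp sumq by simp
    qed
    have ji: "j \<noteq> i" using qj qp by auto
    define R where "R = uminus ` F \<inter> {x. inner (estar i) x = 0}"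
    have cnF: "convex (uminus ` F)" using face_of_imp_convex[OF nFface] .
    have Fge: "F \<subseteq> {y. inner (estar i) y \<ge> 0}" unfolding Fhull
      using estar by (intro hull_minimal) (auto simp: convex_halfspace_ge)
    have le0: "inner (estar i) x \<le> 0" if "x \<in> uminus ` F" for x
      using that Fge by auto
    have Rface: "R face_of uminus ` F" unfolding R_def
      using face_of_Int_supporting_hyperplane_le[OF cnF le0] by simp
    have RfP: "R face_of P" using face_of_trans[OF Rface nFface] .
    have nekR: "- e k \<in> R" if "k \<noteq> i" for k using that neF estar by (simp add: R_def)
    have neiR: "- e i \<notin> R" using estar by (simp add: R_def)
    have Rne: "R \<noteq> {}" using nekR[OF ji] by blast
    have RnP: "R \<noteq> P" using neiR neP by blast
    have "R = \<Inter>{G. G facet_of P \<and> R \<subseteq> G}"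
      using face_of_polyhedron[OF pf(2) RfP Rne RnP] .
    then obtain G where G: "G facet_of P" "R \<subseteq> G" "- e i \<notin> G" using neiR by blast
    define g where "g = eta G"
    note fg = facet_eta[OF fano G(1), folded g_def]
    have glat: "lattice_pt g" unfolding g_def using eta_lattice[OF refl G(1)] .
    have gek: "inner g (e k) = 1" if "k \<noteq> i" for k
      using fg(1) nekR[OF that] G(2) by fastforce
    have "inner g (- e i) \<ge> -1" "inner g (- e i) \<noteq> -1" "inner g (- e i) \<in> \<int>"
      using fg(2) neP fg(3) G(3) lattice_inner[OF glat nelat] by blast+
    then have "inner g (- e i) \<ge> 0" using int_ge by blast
    then have gei0: "inner g (e i) \<le> 0" by simp
    have geiint: "inner g (e i) \<in> \<int>" using lattice_inner[OF glat elat] .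
    have geige: "inner g (e i) \<ge> -1" using fg(2) eP by blast
    have gv: "inner g v = q i * (inner g (e i) - 1)"
      using sum_special[OF sumq, of i "\<lambda>j. inner g (e j)" 1] gek by (simp add: inner_v)
    have gvint: "inner g v \<in> \<int>" using lattice_inner[OF glat vlat] .
    have gvge: "inner g v \<ge> -1" using fg(2) vP by blast
    have "inner g v < 0" using qp gei0 by (simp add: gv mult_pos_neg)
    then have gvm: "inner g v = -1" using int_neg gvint gvge by blast
    then have vG: "v \<in> G" using fg(3) vP by blast
    have "inner g (e i) \<noteq> -1"
    proof
      assume "inner g (e i) = -1"
      then have "e i \<in> G" using fg(3) eP by blast
      moreover have "(\<lambda>k. - e k) ` (UNIV - {i}) \<subseteq> G" using nekR G(2) by blast
      ultimately have sub: "insert v (insert (e i) ((\<lambda>k. - e k) ` (UNIV - {i}))) \<subseteq> G" using vG by blast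
      have ext: "\<forall>x\<in>insert v (insert (e i) ((\<lambda>k. - e k) ` (UNIV - {i}))). x extreme_point_of P"
        using v neext eext by blast
      have inj': "inj (\<lambda>k. - e k)" using e_inj by (auto simp: inj_def)
      have d1: "v \<noteq> e i" using uvz ue[of i] by auto
      have d2: "v \<notin> (\<lambda>k. - e k) ` (UNIV - {i})" using uvz u_ne by auto
      have d3: "e i \<notin> (\<lambda>k. - e k) ` (UNIV - {i})" using u_ne ue[of i] by force
      show False using count_contra[OF fano simp G(1) inj' sub ext d1 d2 d3] .
    qed
    then have "inner g (e i) \<ge> 0" using int_ge geiint geige by blast
    then have "inner g (e i) = 0" using gei0 by linarith
    then show "q i = 1" using gvm gv by simp
  qed

  have qv: "q i = -1 \<or> q i = 0 \<or> q i = 1" for i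
    using neg[of i] pos[of i] by force
  define I where "I = {i. q i < 0}"
  define J where "J = {i. 0 < q i}"
  have IJ: "I \<inter> J = {}" by (auto simp: I_def J_def)
  have sJ: "(\<Sum>j\<in>J. f j) = (\<Sum>j\<in>UNIV. if 0 < q j then f j else 0)" for f :: "'n \<Rightarrow> 'b::comm_monoid_add"
    using sum.inter_filter[of UNIV f "\<lambda>j. 0 < q j"] by (simp add: J_def)
  have sI: "(\<Sum>j\<in>I. f j) = (\<Sum>j\<in>UNIV. if q j < 0 then f j else 0)" for f :: "'n \<Rightarrow> 'b::comm_monoid_add"
    using sum.inter_filter[of UNIV f "\<lambda>j. q j < 0"] by (simp add: I_def)
  have "v = (\<Sum>j\<in>UNIV. (if 0 < q j then e j else 0) - (if q j < 0 then e j else 0))"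
    unfolding q
  proof (rule sum.cong[OF HOL.refl])
    fix j
    show "q j *\<^sub>R e j = (if 0 < q j then e j else 0) - (if q j < 0 then e j else 0)"
      using qv[of j] by (elim disjE) auto
  qed
  also have "\<dots> = (\<Sum>j\<in>J. e j) - (\<Sum>i\<in>I. e i)" by (simp add: sJ sI sum_subtractf)
  finally have veq: "v = (\<Sum>j\<in>J. e j) - (\<Sum>i\<in>I. e i)" .
  have "sum q UNIV = (\<Sum>j\<in>UNIV. (if 0 < q j then 1 else 0) - (if q j < 0 then 1 else 0))"
  proof (rule sum.cong[OF HOL.refl])
    fix j
    show "q j = (if 0 < q j then 1 else 0) - (if q j < 0 then 1 else 0)"
      using qv[of j] by (elim disjE) auto
  qed
  then have "(0::real) = (\<Sum>j\<in>UNIV. (if 0 < q j then 1 else 0) - (if q j < 0 then 1 else 0))"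
    using sumq by simp
  also have "\<dots> = real (card J) - real (card I)"
    using sJ[of "\<lambda>_. 1::real"] sI[of "\<lambda>_. 1::real"] by (simp add: sum_subtractf)
  finally have "card I = card J" by simp
  then show ?thesis using neg IJ veq by blast
qed

end
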